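(* Let $A$ be $\mathbb{Z}$ or $\mathbb{Z}/n\mathbb{Z}$ for an integer $n\geq 2$, and $H_A=H_1(\Sigma_2;A)$, identified with $A^4$ via the basis $x_1,x_2,y_1,y_2$, with $v_i$ denoting the $i$-th coordinate of $v\in H_A$. Let $\alpha,\beta,\gamma,\delta$ be the generators of the genus-$2$ Goeritz group $\mathcal{E}_2$ described in the context. Then \[ H^1(\mathcal{E}_2;H_A)\cong \{d \in Z^{1}(\mathcal{E}_2;H_A) \;:\; d(\delta)_1 - d(\alpha)_1 = d(\gamma)_2 - d(\beta)_2 = d(\gamma)_3 - d(\alpha)_3 = d(\beta)_4 - d(\delta)_4 = 0 \}. \]
   Context: Let $S^3=H_2\cup H_2^*$ be a genus-$2$ Heegaard splitting with Heegaard surface $\Sigma_2=\partial H_2$. The genus-$2$ Goeritz group $\mathcal{E}_2$ is the group of isotopy classes $[f]$ of orientation-preserving homeomorphisms of $\Sigma_2$ for which there is an orientation-preserving self-homeomorphism $F$ of $S^3$ with $F(H_2)=H_2$ and $[F|_{\Sigma_2}]=[f]$; it acts on $H_A$ by induced maps. Fix a basis $x_1,x_2,y_1,y_2$ of $H_1(\Sigma_2;\mathbb{Z})$ (inducing one of $H_A$). $\mathcal{E}_2$ is generated by four elements $\alpha,\beta,\gamma,\delta$ acting as follows: $\alpha_*(x_i)=-x_i$, $\alpha_*(y_i)=-y_i$ ($i=1,2$); $\beta_*(x_1)=x_1$, $\beta_*(x_2)=-x_2$, $\beta_*(y_1)=y_1$, $\beta_*(y_2)=-y_2$; $\gamma_*(x_1)=-x_2$,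 $\gamma_*(x_2)=-x_1$, $\gamma_*(y_1)=-y_2$, $\gamma_*(y_2)=-y_1$; $\delta_*(x_1)=-x_1+x_2$, $\delta_*(x_2)=-x_1$, $\delta_*(y_1)=y_2$, $\delta_*(y_2)=-y_1-y_2$. $Z^1(\mathcal{E}_2;H_A)$ is the group of crossed homomorphisms $d:\mathcal{E}_2\to H_A$, i.e. maps with $d(\phi\psi)=d(\phi)+\phi\, d(\psi)$ for all $\phi,\psi\in\mathcal{E}_2$; $d(\alpha)$ etc. denote the values of $d$ on the classes of these generators, and $d(\phi)_i$ the $i$-th coordinate. $H^1(\mathcal{E}_2;H_A)$ is the first twisted group cohomology, equal to $Z^1(\mathcal{E}_2;H_A)$ modulo the principal crossed homomorphisms $\phi\mapsto \phi u-u$, $u\in H_A$. *)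

theory Defs
  imports "HOL-Algebra.Coset" "HOL-Algebra.Generated_Groups"
begin

text \<open>Coordinates of H_A = H_1(Sigma_2; A) = A^4 w.r.t. the basis x1, x2, y1, y2
  (coordinates 1,2,3,4 of the paper).  Elements of H_A are functions coord => A.\<close>
datatype coord = X1 | X2 | Y1 | Y2

definition basis :: "coord \<Rightarrow> coord \<Rightarrow> 'a::comm_ring_1" where
  "basis i = (\<lambda>j. if j = i then 1 else 0)"

definition crossed_homs ::
  "('g, 'b) monoid_scheme \<Rightarrow> ('g \<Rightarrow> (coord \<Rightarrow> 'a) \<Rightarrow> (coord \<Rightarrow> 'a))
     \<Rightarrow> ('g \<Rightarrow> coord \<Rightarrow> 'a::comm_ring_1) set" where
  "crossed_homs G act =
     {d. d \<in> extensional (carrier G) \<and>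
         (\<forall>\<phi>\<in>carrier G. \<forall>\<psi>\<in>carrier G.
            d (\<phi> \<otimes>\<^bsub>G\<^esub> \<psi>) = (\<lambda>i. d \<phi> i + act \<phi> (d \<psi>) i))}"

definition Z1 ::
  "('g, 'b) monoid_scheme \<Rightarrow> ('g \<Rightarrow> (coord \<Rightarrow> 'a) \<Rightarrow> (coord \<Rightarrow> 'a))
     \<Rightarrow> ('g \<Rightarrow> coord \<Rightarrow> 'a::comm_ring_1) monoid" where
  "Z1 G act = \<lparr>carrier = crossed_homs G act,
               mult = (\<lambda>d e. \<lambda>g\<in>carrier G. \<lambda>i. d g i + e g i),
               one = (\<lambda>g\<in>carrier G. \<lambda>i. 0)\<rparr>"

definition B1 ::
  "('g, 'b) monoid_scheme \<Rightarrow> ('g \<Rightarrow> (coord \<Rightarrow> 'a) \<Rightarrow> (coord \<Rightarrow> 'a))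
     \<Rightarrow> ('g \<Rightarrow> coord \<Rightarrow> 'a::comm_ring_1) set" where
  "B1 G act = {(\<lambda>g\<in>carrier G. \<lambda>i. act g u i - u i) | u. True}"

end

theory Submission
  imports Defs
begin

locale goer =
  fixes G :: "('g, 'b) monoid_scheme"
    and act :: "'g \<Rightarrow> (coord \<Rightarrow> 'a::comm_ring_1) \<Rightarrow> (coord \<Rightarrow> 'a)"
    and \<alpha> \<beta> \<gamma> \<delta> :: 'g
  assumes A_quot_Z: "surj (of_int :: int \<Rightarrow> 'a)"
    and grp: "group G"
    and act_mult: "\<And>g h v. g \<in> carrier G \<Longrightarrow> h \<in> carrier G \<Longrightarrow>
                     act (g \<otimes>\<^bsub>G\<^esub> h) v = act g (act h v)"
    and gens: "\<alpha> \<in> carrier G" "\<beta> \<in> carrier G" "\<gamma> \<in> carrier G" "\<delta> \<in> carrier G"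
    and act_add: "\<And>g v w. g \<in> carrier G \<Longrightarrow>
                     act g (\<lambda>i. v i + w i) = (\<lambda>i. act g v i + act g w i)"
    and act_\<alpha>: "act \<alpha> (basis X1) = (\<lambda>j. - basis X1 j)"
                "act \<alpha> (basis X2) = (\<lambda>j. - basis X2 j)"
                "act \<alpha> (basis Y1) = (\<lambda>j. - basis Y1 j)"
                "act \<alpha> (basis Y2) = (\<lambda>j. - basis Y2 j)"
    and act_\<beta>: "act \<beta> (basis X1) = basis X1"
                "act \<beta> (basis X2) = (\<lambda>j. - basis X2 j)"
                "act \<beta> (basis Y1) = basis Y1"
                "act \<beta> (basis Y2) = (\<lambda>j. - basis Y2 j)"
    and act_\<gamma>: "act \<gamma> (basis X1) = (\<lambda>j. - basis X2 j)"
                "act \<gamma> (basis X2) = (\<lambda>j. - basis X1 j)"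
                "act \<gamma> (basis Y1) = (\<lambda>j. - basis Y2 j)"
                "act \<gamma> (basis Y2) = (\<lambda>j. - basis Y1 j)"
    and act_\<delta>: "act \<delta> (basis X1) = (\<lambda>j. - basis X1 j + basis X2 j)"
                "act \<delta> (basis X2) = (\<lambda>j. - basis X1 j)"
                "act \<delta> (basis Y1) = basis Y2"
                "act \<delta> (basis Y2) = (\<lambda>j. - basis Y1 j - basis Y2 j)"
begin

lemma act_zero: assumes "g \<in> carrier G" shows "act g (\<lambda>i. 0) = (\<lambda>i. 0)"
proof -
  have "act g (\<lambda>i. 0 + 0) = (\<lambda>i. act g (\<lambda>i. 0) i + act g (\<lambda>i. 0) i)"
    using act_add[OF assms] .
  then have "\<And>i. act g (\<lambda>i. 0) i = act g (\<lambda>i. 0) i + act g (\<lambda>i. 0) i"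
    by (metis add_0)
  then show ?thesis by (intro ext) (metis add_cancel_right_right)
qed

lemma act_neg: assumes "g \<in> carrier G" shows "act g (\<lambda>i. - v i) = (\<lambda>i. - act g v i)"
proof -
  have e: "(\<lambda>i. act g (\<lambda>i. - v i) i + act g v i) = act g (\<lambda>i. - v i + v i)"
    by (rule act_add[OF assms, symmetric])
  also have "\<dots> = (\<lambda>i. 0)" using act_zero[OF assms] by simp
  finally have "\<And>i. act g (\<lambda>i. - v i) i + act g v i = 0" by (rule fun_cong)
  then show ?thesis by (intro ext) (simp add: eq_neg_iff_add_eq_0)
qed

lemma act_diff: assumes "g \<in> carrier G" shows "act g (\<lambda>i. v i - w i) = (\<lambda>i. act g v i - act g w i)"
proof -
  have "act g (\<lambda>i. v i - w i) = act g (\<lambda>i. v i + - w i)" by simp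
  also have "\<dots> = (\<lambda>i. act g v i + act g (\<lambda>i. - w i) i)" by (rule act_add[OF assms])
  also have "\<dots> = (\<lambda>i. act g v i - act g w i)" by (simp add: act_neg[OF assms])
  finally show ?thesis .
qed

lemma act_nat: assumes "g \<in> carrier G"
  shows "act g (\<lambda>i. of_nat n * v i) = (\<lambda>i. of_nat n * act g v i)"
proof (induction n)
  case 0 then show ?case using act_zero[OF assms] by simp
next
  case (Suc n)
  have "act g (\<lambda>i. of_nat (Suc n) * v i) = act g (\<lambda>i. v i + of_nat n * v i)"
    by (simp add: algebra_simps)
  also have "\<dots> = (\<lambda>i. act g v i + of_nat n * act g v i)"
    using act_add[OF assms] Suc by simp
  finally show ?case by (simp add: algebra_simps)
qed

lemma act_smult: assumes "g \<in> carrier G"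
  shows "act g (\<lambda>i. c * v i) = (\<lambda>i. c * act g v i)"
proof -
  obtain k where c: "c = of_int k" using A_quot_Z by (metis surj_def)
  show ?thesis
  proof (cases "k \<ge> 0")
    case True
    then obtain n where "k = int n" using nonneg_eq_int by blast
    then show ?thesis using c act_nat[OF assms] by simp
  next
    case False
    then have "- k \<ge> 0" by simp
    then obtain n where "- k = int n" using nonneg_eq_int by blast
    then have "k = - int n" by simp
    then have "c = - of_nat n" using c by simp
    then show ?thesis using act_nat[OF assms, of n] act_neg[OF assms, of "\<lambda>i. of_nat n * v i"]
      by simp
  qed
qed

lemma expand: "(v::coord \<Rightarrow> 'a) = (\<lambda>j. v X1 * basis X1 j + v X2 * basis X2 j + v Y1 * basis Y1 j + v Y2 * basis Y2 j)"
proof (rule ext)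
  fix j show "v j = v X1 * basis X1 j + v X2 * basis X2 j + v Y1 * basis Y1 j + v Y2 * basis Y2 j"
    by (cases j) (simp_all add: basis_def)
qed

lemma act_expand: assumes "g \<in> carrier G"
  shows "act g v = (\<lambda>j. v X1 * act g (basis X1) j + v X2 * act g (basis X2) j
                       + v Y1 * act g (basis Y1) j + v Y2 * act g (basis Y2) j)"
proof -
  have "act g v = act g (\<lambda>j. v X1 * basis X1 j + v X2 * basis X2 j + v Y1 * basis Y1 j + v Y2 * basis Y2 j)"
    using expand[of v] by (rule arg_cong)
  also have "\<dots> = (\<lambda>j. v X1 * act g (basis X1) j + v X2 * act g (basis X2) j
                       + v Y1 * act g (basis Y1) j + v Y2 * act g (basis Y2) j)"
    by (simp only: act_add[OF assms] act_smult[OF assms])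
  finally show ?thesis .
qed

lemma act_a: "act \<alpha> v = (\<lambda>j. - v j)"
  by (rule ext, subst act_expand[OF gens(1)], case_tac j) (simp_all only: act_\<alpha>, simp_all add: basis_def)
lemma act_b: "act \<beta> v = (\<lambda>j. case j of X1 \<Rightarrow> v X1 | X2 \<Rightarrow> - v X2 | Y1 \<Rightarrow> v Y1 | Y2 \<Rightarrow> - v Y2)"
  by (rule ext, subst act_expand[OF gens(2)], case_tac j) (simp_all only: act_\<beta>, simp_all add: basis_def)
lemma act_c: "act \<gamma> v = (\<lambda>j. case j of X1 \<Rightarrow> - v X2 | X2 \<Rightarrow> - v X1 | Y1 \<Rightarrow> - v Y2 | Y2 \<Rightarrow> - v Y1)"
  by (rule ext, subst act_expand[OF gens(3)], case_tac j) (simp_all only: act_\<gamma>, simp_all add: basis_def)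
lemma act_d: "act \<delta> v = (\<lambda>j. case j of X1 \<Rightarrow> - v X1 - v X2 | X2 \<Rightarrow> v X1 | Y1 \<Rightarrow> - v Y2 | Y2 \<Rightarrow> v Y1 - v Y2)"
  by (rule ext, subst act_expand[OF gens(4)], case_tac j) (simp_all only: act_\<delta>, simp_all add: basis_def)


lemma ext_eq: "d \<in> extensional (carrier G) \<Longrightarrow> (\<And>g. g \<in> carrier G \<Longrightarrow> f g = d g) \<Longrightarrow> restrict f (carrier G) = d"
  by (metis extensional_restrict restrict_ext)

lemma prod_in: "\<phi> \<in> carrier G \<Longrightarrow> \<psi> \<in> carrier G \<Longrightarrow> \<phi> \<otimes>\<^bsub>G\<^esub> \<psi> \<in> carrier G"
  using grp by (simp add: group.is_monoid monoid.m_closed)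

lemma chI:
  assumes "d \<in> extensional (carrier G)"
    and "\<And>\<phi> \<psi>. \<phi> \<in> carrier G \<Longrightarrow> \<psi> \<in> carrier G \<Longrightarrow> d (\<phi> \<otimes>\<^bsub>G\<^esub> \<psi>) = (\<lambda>i. d \<phi> i + act \<phi> (d \<psi>) i)"
  shows "d \<in> crossed_homs G act"
  using assms unfolding crossed_homs_def by blast

lemma chD:
  assumes "d \<in> crossed_homs G act" "\<phi> \<in> carrier G" "\<psi> \<in> carrier G"
  shows "d (\<phi> \<otimes>\<^bsub>G\<^esub> \<psi>) = (\<lambda>i. d \<phi> i + act \<phi> (d \<psi>) i)"
  using assms unfolding crossed_homs_def by blast

lemma chE: "d \<in> crossed_homs G act \<Longrightarrow> d \<in> extensional (carrier G)"
  unfolding crossed_homs_def by blast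

lemma ch_add:
  assumes d: "d \<in> crossed_homs G act" and e: "e \<in> crossed_homs G act"
  shows "(\<lambda>g\<in>carrier G. \<lambda>i. d g i + e g i) \<in> crossed_homs G act"
proof (rule chI)
  fix \<phi> \<psi> assume f: "\<phi> \<in> carrier G" and s: "\<psi> \<in> carrier G"
  have "act \<phi> (\<lambda>i. d \<psi> i + e \<psi> i) = (\<lambda>i. act \<phi> (d \<psi>) i + act \<phi> (e \<psi>) i)"
    using act_add[OF f] by simp
  then show "(\<lambda>g\<in>carrier G. \<lambda>i. d g i + e g i) (\<phi> \<otimes>\<^bsub>G\<^esub> \<psi>) =
    (\<lambda>i. (\<lambda>g\<in>carrier G. \<lambda>i. d g i + e g i) \<phi> i + act \<phi> ((\<lambda>g\<in>carrier G. \<lambda>i. d g i + e g i) \<psi>) i)"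
    using f s prod_in[OF f s] chD[OF d f s] chD[OF e f s] by (simp add: algebra_simps)
qed simp

lemma ch_diff:
  assumes d: "d \<in> crossed_homs G act" and e: "e \<in> crossed_homs G act"
  shows "(\<lambda>g\<in>carrier G. \<lambda>i. d g i - e g i) \<in> crossed_homs G act"
proof (rule chI)
  fix \<phi> \<psi> assume f: "\<phi> \<in> carrier G" and s: "\<psi> \<in> carrier G"
  have "act \<phi> (\<lambda>i. d \<psi> i - e \<psi> i) = (\<lambda>i. act \<phi> (d \<psi>) i - act \<phi> (e \<psi>) i)"
    using act_diff[OF f] by simp
  then show "(\<lambda>g\<in>carrier G. \<lambda>i. d g i - e g i) (\<phi> \<otimes>\<^bsub>G\<^esub> \<psi>) =
    (\<lambda>i. (\<lambda>g\<in>carrier G. \<lambda>i. d g i - e g i) \<phi> i + act \<phi> ((\<lambda>g\<in>carrier G. \<lambda>i. d g i - e g i) \<psi>) i)"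
    using f s prod_in[OF f s] chD[OF d f s] chD[OF e f s] by (simp add: algebra_simps)
qed simp

lemma ch_neg:
  assumes d: "d \<in> crossed_homs G act"
  shows "(\<lambda>g\<in>carrier G. \<lambda>i. - d g i) \<in> crossed_homs G act"
proof (rule chI)
  fix \<phi> \<psi> assume f: "\<phi> \<in> carrier G" and s: "\<psi> \<in> carrier G"
  have "act \<phi> (\<lambda>i. - d \<psi> i) = (\<lambda>i. - act \<phi> (d \<psi>) i)"
    using act_neg[OF f] by simp
  then show "(\<lambda>g\<in>carrier G. \<lambda>i. - d g i) (\<phi> \<otimes>\<^bsub>G\<^esub> \<psi>) =
    (\<lambda>i. (\<lambda>g\<in>carrier G. \<lambda>i. - d g i) \<phi> i + act \<phi> ((\<lambda>g\<in>carrier G. \<lambda>i. - d g i) \<psi>) i)"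
    using f s prod_in[OF f s] chD[OF d f s] by (simp add: algebra_simps)
qed simp

lemma ch_zero: "(\<lambda>g\<in>carrier G. \<lambda>i. 0) \<in> crossed_homs G act"
  by (rule chI) (simp_all add: prod_in act_zero)

lemma grp_sub:
  assumes C: "C \<subseteq> crossed_homs G act"
    and add: "\<And>d e. d \<in> C \<Longrightarrow> e \<in> C \<Longrightarrow> (\<lambda>g\<in>carrier G. \<lambda>i. d g i + e g i) \<in> C"
    and zero: "(\<lambda>g\<in>carrier G. \<lambda>i. 0) \<in> C"
    and neg: "\<And>d. d \<in> C \<Longrightarrow> (\<lambda>g\<in>carrier G. \<lambda>i. - d g i) \<in> C"
  shows "group ((Z1 G act)\<lparr>carrier := C\<rparr>)"
proof (rule groupI)
  fix x y z assume x: "x \<in> carrier ((Z1 G act)\<lparr>carrier := C\<rparr>)"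
    and y: "y \<in> carrier ((Z1 G act)\<lparr>carrier := C\<rparr>)"
    and z: "z \<in> carrier ((Z1 G act)\<lparr>carrier := C\<rparr>)"
  show "x \<otimes>\<^bsub>(Z1 G act)\<lparr>carrier := C\<rparr>\<^esub> y \<in> carrier ((Z1 G act)\<lparr>carrier := C\<rparr>)"
    using x y add by (simp add: Z1_def)
  show "x \<otimes>\<^bsub>(Z1 G act)\<lparr>carrier := C\<rparr>\<^esub> y \<otimes>\<^bsub>(Z1 G act)\<lparr>carrier := C\<rparr>\<^esub> z =
        x \<otimes>\<^bsub>(Z1 G act)\<lparr>carrier := C\<rparr>\<^esub> (y \<otimes>\<^bsub>(Z1 G act)\<lparr>carrier := C\<rparr>\<^esub> z)"
    by (simp add: Z1_def algebra_simps cong: restrict_cong)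
next
  show "\<one>\<^bsub>(Z1 G act)\<lparr>carrier := C\<rparr>\<^esub> \<in> carrier ((Z1 G act)\<lparr>carrier := C\<rparr>)"
    using zero by (simp add: Z1_def)
next
  fix x assume x: "x \<in> carrier ((Z1 G act)\<lparr>carrier := C\<rparr>)"
  then have xe: "x \<in> extensional (carrier G)" using C chE by (auto simp: Z1_def)
  show "\<one>\<^bsub>(Z1 G act)\<lparr>carrier := C\<rparr>\<^esub> \<otimes>\<^bsub>(Z1 G act)\<lparr>carrier := C\<rparr>\<^esub> x = x"
    by (simp add: Z1_def) (rule ext_eq[OF xe], simp)
  show "\<exists>y\<in>carrier ((Z1 G act)\<lparr>carrier := C\<rparr>). y \<otimes>\<^bsub>(Z1 G act)\<lparr>carrier := C\<rparr>\<^esub> x = \<one>\<^bsub>(Z1 G act)\<lparr>carrier := C\<rparr>\<^esub>"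
  proof (intro bexI)
    show "(\<lambda>g\<in>carrier G. \<lambda>i. - x g i) \<in> carrier ((Z1 G act)\<lparr>carrier := C\<rparr>)"
      using x neg by (simp add: Z1_def)
    show "(\<lambda>g\<in>carrier G. \<lambda>i. - x g i) \<otimes>\<^bsub>(Z1 G act)\<lparr>carrier := C\<rparr>\<^esub> x = \<one>\<^bsub>(Z1 G act)\<lparr>carrier := C\<rparr>\<^esub>"
      by (simp add: Z1_def cong: restrict_cong)
  qed
qed

lemma Z1_upd: "(Z1 G act)\<lparr>carrier := crossed_homs G act\<rparr> = Z1 G act"
  by (simp add: Z1_def)

lemma grp_Z1: "group (Z1 G act)"
  using grp_sub[of "crossed_homs G act"] ch_add ch_zero ch_neg by (simp add: Z1_upd)

definition uvec :: "('g \<Rightarrow> coord \<Rightarrow> 'a) \<Rightarrow> coord \<Rightarrow> 'a" where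
  "uvec d = (\<lambda>j. case j of
      X1 \<Rightarrow> - (d \<delta> X1 - d \<alpha> X1) - (d \<gamma> X2 - d \<beta> X2)
    | X2 \<Rightarrow> - (d \<delta> X1 - d \<alpha> X1)
    | Y1 \<Rightarrow> - (d \<beta> Y2 - d \<delta> Y2)
    | Y2 \<Rightarrow> - (d \<beta> Y2 - d \<delta> Y2) - (d \<gamma> Y1 - d \<alpha> Y1))"

definition bu :: "(coord \<Rightarrow> 'a) \<Rightarrow> 'g \<Rightarrow> coord \<Rightarrow> 'a" where
  "bu u = (\<lambda>g\<in>carrier G. \<lambda>i. act g u i - u i)"

definition hh :: "('g \<Rightarrow> coord \<Rightarrow> 'a) \<Rightarrow> 'g \<Rightarrow> coord \<Rightarrow> 'a" where
  "hh d = (\<lambda>g\<in>carrier G. \<lambda>i. d g i - bu (uvec d) g i)"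

lemma bu_ch: "bu u \<in> crossed_homs G act"
proof (rule chI)
  fix \<phi> \<psi> assume f: "\<phi> \<in> carrier G" and s: "\<psi> \<in> carrier G"
  have "act \<phi> (\<lambda>i. act \<psi> u i - u i) = (\<lambda>i. act \<phi> (act \<psi> u) i - act \<phi> u i)"
    using act_diff[OF f, of "act \<psi> u" u] by simp
  then show "bu u (\<phi> \<otimes>\<^bsub>G\<^esub> \<psi>) = (\<lambda>i. bu u \<phi> i + act \<phi> (bu u \<psi>) i)"
    using f s prod_in[OF f s] act_mult[OF f s] by (simp add: bu_def)
qed (simp add: bu_def)

lemma uvec_bu: "uvec (bu u) = u"
  by (rule ext, case_tac x) (simp_all add: uvec_def bu_def gens act_a act_b act_c act_d)

lemma uvec_add: "uvec (\<lambda>g\<in>carrier G. \<lambda>i. d g i + e g i) = (\<lambda>j. uvec d j + uvec e j)"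
  by (rule ext, case_tac j) (simp_all add: uvec_def gens algebra_simps)

lemma bu_add: "g \<in> carrier G \<Longrightarrow> bu (\<lambda>j. u j + v j) g = (\<lambda>i. bu u g i + bu v g i)"
  by (simp add: bu_def act_add algebra_simps)

definition S where
  "S = {d \<in> crossed_homs G act.
                 d \<delta> X1 - d \<alpha> X1 = 0 \<and> d \<gamma> X2 - d \<beta> X2 = 0 \<and>
                 d \<gamma> Y1 - d \<alpha> Y1 = 0 \<and> d \<beta> Y2 - d \<delta> Y2 = 0}"

lemma hh_S: "d \<in> crossed_homs G act \<Longrightarrow> hh d \<in> S"
  unfolding S_def
proof (intro CollectI conjI)
  assume d: "d \<in> crossed_homs G act"
  show "hh d \<in> crossed_homs G act" unfolding hh_def by (rule ch_diff[OF d bu_ch])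
qed (simp_all add: hh_def bu_def uvec_def gens act_a act_b act_c act_d)

lemma S_ch: "S \<subseteq> crossed_homs G act" unfolding S_def by blast

lemma hh_fix: "d \<in> S \<Longrightarrow> hh d = d"
proof -
  assume d: "d \<in> S"
  then have u: "uvec d = (\<lambda>j. 0)" by (intro ext, case_tac j) (simp_all add: S_def uvec_def)
  show "hh d = d" unfolding hh_def u
    by (rule ext_eq[OF chE]) (use d S_ch in \<open>auto simp: bu_def act_zero\<close>)
qed

lemma hh_image: "hh ` crossed_homs G act = S"
proof
  show "hh ` crossed_homs G act \<subseteq> S" using hh_S by blast
  show "S \<subseteq> hh ` crossed_homs G act"
  proof
    fix d assume "d \<in> S"
    then show "d \<in> hh ` crossed_homs G act" using hh_fix S_ch by (metis image_eqI subsetD)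
  qed
qed

lemma hh_mult: "hh (\<lambda>g\<in>carrier G. \<lambda>i. d g i + e g i) = (\<lambda>g\<in>carrier G. \<lambda>i. hh d g i + hh e g i)"
  unfolding hh_def uvec_add
  by (rule restrict_ext) (simp add: bu_add algebra_simps)

lemma grp_S: "group ((Z1 G act)\<lparr>carrier := S\<rparr>)"
proof (rule grp_sub[OF S_ch])
  fix d e assume d: "d \<in> S" and e: "e \<in> S"
  show "(\<lambda>g\<in>carrier G. \<lambda>i. d g i + e g i) \<in> S"
    using d e ch_add unfolding S_def by (simp add: gens algebra_simps)
next
  show "(\<lambda>g\<in>carrier G. \<lambda>i. 0) \<in> S" using ch_zero unfolding S_def by (simp add: gens)
next
  fix d assume d: "d \<in> S"
  show "(\<lambda>g\<in>carrier G. \<lambda>i. - d g i) \<in> S"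
    using d ch_neg unfolding S_def by (simp add: gens algebra_simps)
qed

lemma kernel_eq: "kernel (Z1 G act) ((Z1 G act)\<lparr>carrier := S\<rparr>) hh = B1 G act"
proof -
  have "d \<in> B1 G act" if d: "d \<in> crossed_homs G act" and h: "hh d = (\<lambda>g\<in>carrier G. \<lambda>i. 0)" for d
  proof -
    have "d = bu (uvec d)"
    proof (rule extensionalityI[OF chE[OF d] chE[OF bu_ch]])
      fix g assume g: "g \<in> carrier G"
      have "hh d g = (\<lambda>i. 0)" using h g by simp
      then have "\<And>i. d g i - bu (uvec d) g i = 0" using g by (simp add: hh_def fun_eq_iff)
      then show "d g = bu (uvec d) g" by (simp add: fun_eq_iff)
    qed
    then show ?thesis unfolding B1_def bu_def by blast
  qed
  moreover have "bu u \<in> crossed_homs G act \<and> hh (bu u) = (\<lambda>g\<in>carrier G. \<lambda>i. 0)" for u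
    using bu_ch by (simp add: hh_def uvec_bu cong: restrict_cong)
  ultimately show ?thesis
    unfolding kernel_def B1_def by (auto simp: Z1_def bu_def[symmetric])
qed

lemma main: "Z1 G act Mod B1 G act \<cong> (Z1 G act)\<lparr>carrier := S\<rparr>"
proof -
  have "group_hom (Z1 G act) ((Z1 G act)\<lparr>carrier := S\<rparr>) hh"
    unfolding group_hom_def group_hom_axioms_def
  proof (intro conjI)
    show "group (Z1 G act)" by (rule grp_Z1)
    show "group ((Z1 G act)\<lparr>carrier := S\<rparr>)" by (rule grp_S)
    show "hh \<in> hom (Z1 G act) ((Z1 G act)\<lparr>carrier := S\<rparr>)"
      unfolding hom_def using hh_S by (auto simp: Z1_def hh_mult)
  qed
  then have "(Z1 G act Mod kernel (Z1 G act) ((Z1 G act)\<lparr>carrier := S\<rparr>) hh) \<cong> (Z1 G act)\<lparr>carrier := S\<rparr>"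
    by (rule group_hom.FactGroup_iso) (simp add: hh_image Z1_def)
  then show ?thesis by (simp only: kernel_eq)
qed

end

theorem lemma2p3:
  fixes G :: "('g, 'b) monoid_scheme"
    and act :: "'g \<Rightarrow> (coord \<Rightarrow> 'a::comm_ring_1) \<Rightarrow> (coord \<Rightarrow> 'a)"
    and \<alpha> \<beta> \<gamma> \<delta> :: 'g
  assumes A_quot_Z: "surj (of_int :: int \<Rightarrow> 'a)"
    and A_nontriv: "(1::'a) \<noteq> 0"
    and grp: "group G"
    and gens: "\<alpha> \<in> carrier G" "\<beta> \<in> carrier G" "\<gamma> \<in> carrier G" "\<delta> \<in> carrier G"
    and generated: "generate G {\<alpha>, \<beta>, \<gamma>, \<delta>} = carrier G"
    and act_one: "\<And>v. act \<one>\<^bsub>G\<^esub> v = v"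
    and act_mult: "\<And>g h v. g \<in> carrier G \<Longrightarrow> h \<in> carrier G \<Longrightarrow>
                     act (g \<otimes>\<^bsub>G\<^esub> h) v = act g (act h v)"
    and act_add: "\<And>g v w. g \<in> carrier G \<Longrightarrow>
                     act g (\<lambda>i. v i + w i) = (\<lambda>i. act g v i + act g w i)"
    and act_\<alpha>: "act \<alpha> (basis X1) = (\<lambda>j. - basis X1 j)"
                "act \<alpha> (basis X2) = (\<lambda>j. - basis X2 j)"
                "act \<alpha> (basis Y1) = (\<lambda>j. - basis Y1 j)"
                "act \<alpha> (basis Y2) = (\<lambda>j. - basis Y2 j)"
    and act_\<beta>: "act \<beta> (basis X1) = basis X1"
                "act \<beta> (basis X2) = (\<lambda>j. - basis X2 j)"
                "act \<beta> (basis Y1) = basis Y1"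
                "act \<beta> (basis Y2) = (\<lambda>j. - basis Y2 j)"
    and act_\<gamma>: "act \<gamma> (basis X1) = (\<lambda>j. - basis X2 j)"
                "act \<gamma> (basis X2) = (\<lambda>j. - basis X1 j)"
                "act \<gamma> (basis Y1) = (\<lambda>j. - basis Y2 j)"
                "act \<gamma> (basis Y2) = (\<lambda>j. - basis Y1 j)"
    and act_\<delta>: "act \<delta> (basis X1) = (\<lambda>j. - basis X1 j + basis X2 j)"
                "act \<delta> (basis X2) = (\<lambda>j. - basis X1 j)"
                "act \<delta> (basis Y1) = basis Y2"
                "act \<delta> (basis Y2) = (\<lambda>j. - basis Y1 j - basis Y2 j)"
  shows "Z1 G act Mod B1 G act \<cong>
           (Z1 G act)\<lparr>carrier :=
              {d \<in> crossed_homs G act.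
                 d \<delta> X1 - d \<alpha> X1 = 0 \<and> d \<gamma> X2 - d \<beta> X2 = 0 \<and>
                 d \<gamma> Y1 - d \<alpha> Y1 = 0 \<and> d \<beta> Y2 - d \<delta> Y2 = 0}\<rparr>"
proof -
  interpret goer G act \<alpha> \<beta> \<gamma> \<delta>
    unfolding goer_def using assms by blast
  show ?thesis using main unfolding S_def .
qed

end
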